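(* Let $W$ be the affine Weyl group of type $A_n^{(1)}$, let $w\in W$ and $j\in\{1,\dots,n\}$. Then (1) $\mathcal{L}_{\Lambda_0}(w)=\mathcal{L}_{\Lambda_0}(\sigma_jw)=\mathcal{L}_{\Lambda_0}(\sigma_1^jw)$; (2) $\mathcal{L}_{\Lambda_0}(wf^j)=\mathcal{L}_{\Lambda_0}(\pi_j(w))$, where $f=[\omega_1]$.
   Context: Affine Kac–Moody setting of type $A_n^{(1)}$: $\mathfrak h^*$ contains simple roots $\alpha_0,\dots,\alpha_n$, the null root $\delta=\sum_{i=0}^n\alpha_i$, the affine fundamental weight $\Lambda_0$; $c=\sum_i\alpha_i^\vee$ is the canonical central element, $\rho^\vee\in\mathfrak h$ satisfies $\langle\alpha_i,\rho^\vee\rangle=1$ for all $0\le i\le n$, and $h=n+1$. The finite part $V_0=\bigoplus_{i=1}^n\mathbb{R}\alpha_i$ is identified with $\{x\in\mathbb{R}^{n+1}\mid\sum x_i=0\}$ via $\alpha_i=\varepsilon_i-\varepsilon_{i+1}$, with standard dot product $(\cdot|\cdot)$ (extended to the standard invariant form on $\mathfrak h^*$). For $x\in V_0$, $t_x(v)=v+\langle v,c\rangle x-((v|x)+\frac12|x|^2\langle v,c\rangle)\delta$. $W_0=\langle s_1,\dots,s_n\rangle\cong S_{n+1}$, $M=V_0\cap\mathbb{Z}^{n+1}$, $W=\langle s_0,\dots,s_n\rangle=T(M)\rtimes W_0$. Fundamental weights $\omega_i=(\varepsilon_1+\dots+\varepsilon_i)-\frac{i}{n+1}(\varepsilon_1+\dots+\varepsilon_{n+1})$,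 $L=\bigoplus_i\mathbb{Z}\omega_i$, extended affine Weyl group $\widehat W=T(L)\rtimes W_0$, fundamental group $F=L/M$. For $j\in\{1,\dots,n\}$, $\sigma_j=t_{\omega_j}w_{0,j}w_0$, where $w_0$ is the longest element of $W_0$ and $w_{0,j}$ the longest element of the parabolic subgroup generated by $\{s_i\mid 1\le i\le n, i\ne j\}$; $\sigma_0=e$. Conjugation by $\sigma_j$ permutes $\{s_0,\dots,s_n\}$, and $\pi_j(w)=\sigma_j^{-1}w\sigma_j\in W$. For $g\in GL(\mathfrak h^* )$, $\mathcal{L}_{\Lambda_0}(g)=\langle\Lambda_0-g\Lambda_0,\rho^\vee\rangle$. The element $wf^j$ of $W\rtimes F$ (with $F$ acting through $[\omega_j]\mapsto\sigma_j$) has atomic length defined as $\mathcal{L}_{\Lambda_0}(wf^j):=\mathcal{L}_{\Lambda_0}(\sigma_j\pi_j(w))$, where $f^j=[\omega_j]$ corresponds to $\sigma_j$. *)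

theory Defs
  imports Main "HOL.Real"
begin

text \<open>Model of \<open>h^*\<close> for type \<open>A_n^{(1)}\<close>: a triple \<open>(x, a, b)\<close> stands for
  \<open>x + a \<Lambda>_0 + b \<delta>\<close>, where \<open>x \<in> V_0 \<subseteq> \<real>^{n+1}\<close> is given by its coordinates
  \<open>x 1, ..., x (n+1)\<close> (other coordinates are irrelevant and left untouched).\<close>

type_synonym hdual = "(nat \<Rightarrow> real) \<times> real \<times> real"

definition ip :: "nat \<Rightarrow> (nat \<Rightarrow> real) \<Rightarrow> (nat \<Rightarrow> real) \<Rightarrow> real" where
  "ip n x y = (\<Sum>k=1..n+1. x k * y k)"

definition eps :: "nat \<Rightarrow> nat \<Rightarrow> real" where
  "eps i = (\<lambda>k. if k = i then 1 else 0)"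

definition theta :: "nat \<Rightarrow> nat \<Rightarrow> real" where
  "theta n = (\<lambda>k. eps 1 k - eps (n+1) k)"

text \<open>standard invariant form: \<open>(\<Lambda>_0|\<delta>) = 1\<close>, \<open>(\<Lambda>_0|\<Lambda>_0) = (\<delta>|\<delta>) = 0\<close>,
  \<open>\<Lambda>_0, \<delta> \<perp> V_0\<close>.\<close>
definition form :: "nat \<Rightarrow> hdual \<Rightarrow> hdual \<Rightarrow> real" where
  "form n v u = (case v of (x, a, b) \<Rightarrow> case u of (y, a', b') \<Rightarrow> ip n x y + a * b' + a' * b)"

definition Lambda0 :: hdual where "Lambda0 = (\<lambda>_. 0, 1, 0)"
definition delta :: hdual where "delta = (\<lambda>_. 0, 0, 1)"

definition hsub :: "hdual \<Rightarrow> hdual \<Rightarrow> hdual" where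
  "hsub v u = (case v of (x, a, b) \<Rightarrow> case u of (y, a', b') \<Rightarrow> (\<lambda>k. x k - y k, a - a', b - b'))"

definition simple_root :: "nat \<Rightarrow> nat \<Rightarrow> hdual" where
  "simple_root n i = (if i = 0 then (\<lambda>k. - theta n k, 0, 1)
                      else (\<lambda>k. eps i k - eps (Suc i) k, 0, 0))"

text \<open>simple reflections \<open>s_i(v) = v - \<langle>v,\<alpha>_i^\<or>\<rangle> \<alpha>_i = v - (v|\<alpha>_i) \<alpha>_i\<close> (simply laced)\<close>
definition refl :: "nat \<Rightarrow> nat \<Rightarrow> hdual \<Rightarrow> hdual" where
  "refl n i v = (let c = form n v (simple_root n i) in
     case v of (x, a, b) \<Rightarrow> case simple_root n i of (y, a', b') \<Rightarrow>
       (\<lambda>k. x k - c * y k, a - c * a', b - c * b'))"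

text \<open>The affine Weyl group \<open>W = \<langle>s_0, ..., s_n\<rangle>\<close> as a group of maps on \<open>h^*\<close>
  (the reflections are involutions, so the monoid generated is the group).\<close>
inductive_set affW :: "nat \<Rightarrow> (hdual \<Rightarrow> hdual) set" for n where
  id: "id \<in> affW n"
| step: "w \<in> affW n \<Longrightarrow> i \<le> n \<Longrightarrow> refl n i \<circ> w \<in> affW n"

text \<open>\<open>t_x(v) = v + \<langle>v,c\<rangle> x - ((v|x) + |x|^2 \<langle>v,c\<rangle>/2) \<delta>\<close>\<close>
definition transl :: "nat \<Rightarrow> (nat \<Rightarrow> real) \<Rightarrow> hdual \<Rightarrow> hdual" where
  "transl n x v = (case v of (y, a, b) \<Rightarrow>
     (\<lambda>k. y k + a * x k, a, b - ip n y x - ip n x x / 2 * a))"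

definition omega :: "nat \<Rightarrow> nat \<Rightarrow> nat \<Rightarrow> real" where
  "omega n j = (\<lambda>k. (if 1 \<le> k \<and> k \<le> j then 1 else 0)
                   - (if 1 \<le> k \<and> k \<le> n+1 then real j / real (n+1) else 0))"

text \<open>longest element \<open>w_0\<close> of \<open>S_{n+1}\<close> (reversal of \<open>1..n+1\<close>) acting on \<open>h^*\<close>\<close>
definition w0_act :: "nat \<Rightarrow> hdual \<Rightarrow> hdual" where
  "w0_act n v = (case v of (y, a, b) \<Rightarrow>
     (\<lambda>k. if 1 \<le> k \<and> k \<le> n+1 then y (n+2-k) else y k, a, b))"

text \<open>longest element \<open>w_{0,j}\<close> of the parabolic subgroup \<open>S_j \<times> S_{n+1-j}\<close>
  (reversal of \<open>1..j\<close> and of \<open>j+1..n+1\<close>) acting on \<open>h^*\<close>\<close>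
definition w0j_act :: "nat \<Rightarrow> nat \<Rightarrow> hdual \<Rightarrow> hdual" where
  "w0j_act n j v = (case v of (y, a, b) \<Rightarrow>
     (\<lambda>k. if 1 \<le> k \<and> k \<le> j then y (j+1-k)
          else if j < k \<and> k \<le> n+1 then y (n+j+2-k) else y k, a, b))"

definition sigma :: "nat \<Rightarrow> nat \<Rightarrow> hdual \<Rightarrow> hdual" where
  "sigma n j = (if j = 0 then id else transl n (omega n j) \<circ> w0j_act n j \<circ> w0_act n)"

definition pi_aut :: "nat \<Rightarrow> nat \<Rightarrow> (hdual \<Rightarrow> hdual) \<Rightarrow> hdual \<Rightarrow> hdual" where
  "pi_aut n j w = inv (sigma n j) \<circ> w \<circ> sigma n j"

text \<open>pairing with \<open>\<rho>^\<or>\<close>: \<open>\<langle>x,\<rho>^\<or>\<rangle> = (x|\<rho>)\<close> on \<open>V_0\<close> with \<open>\<rho> = \<Sum> \<omega>_i\<close>,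
  \<open>\<langle>\<delta>,\<rho>^\<or>\<rangle> = h = n+1\<close>, and the normalisation \<open>\<langle>\<Lambda>_0,\<rho>^\<or>\<rangle> = 0\<close>.\<close>
definition rho :: "nat \<Rightarrow> nat \<Rightarrow> real" where
  "rho n = (\<lambda>k. (real n + 2 - 2 * real k) / 2)"

definition pair_rho_check :: "nat \<Rightarrow> hdual \<Rightarrow> real" where
  "pair_rho_check n v = (case v of (x, a, b) \<Rightarrow> ip n x (rho n) + real (n+1) * b)"

definition atomic_length :: "nat \<Rightarrow> (hdual \<Rightarrow> hdual) \<Rightarrow> real" where
  "atomic_length n g = pair_rho_check n (hsub Lambda0 (g Lambda0))"

text \<open>atomic length of \<open>w f^j\<close> in \<open>W \<rtimes> F\<close>: \<open>\<L>_{\<Lambda>_0}(\<sigma>_j \<pi>_j(w))\<close>\<close>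
definition atomic_length_F :: "nat \<Rightarrow> (hdual \<Rightarrow> hdual) \<Rightarrow> nat \<Rightarrow> real" where
  "atomic_length_F n w j = atomic_length n (sigma n j \<circ> pi_aut n j w)"

end

theory Submission imports Defs begin

declare sum.cl_ivl_Suc[simp del]

lemma ip_uminus_left: "ip n (\<lambda>k. - x k) z = - ip n x z"
  unfolding ip_def by (simp add: sum_negf)

lemma ip_add_left: "ip n (\<lambda>k. x k + y k) z = ip n x z + ip n y z"
  unfolding ip_def by (simp add: distrib_right sum.distrib)
lemma ip_scale_left: "ip n (\<lambda>k. c * x k) z = c * ip n x z"
  unfolding ip_def by (simp only: sum_distrib_left mult.assoc)
lemma ip_neg_left: "ip n (\<lambda>k. 0 - x k) z = - ip n x z"
  unfolding ip_def by (simp add: sum_negf)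
lemma ip_comm: "ip n x y = ip n y x"
  unfolding ip_def by (simp add: mult.commute)

lemma split_sum: "p \<le> N \<Longrightarrow> (\<Sum>k=1..N. f k) = (\<Sum>k=1..p. f k) + (\<Sum>k=Suc p..N. (f k::real))"
proof -
  assume "p \<le> N"
  then have "{1..N} = {1..p} \<union> {Suc p..N}" by auto
  then show ?thesis by (simp add: sum.union_disjoint ivl_disj_int)
qed

definition rot :: "nat \<Rightarrow> nat \<Rightarrow> (nat \<Rightarrow> real) \<Rightarrow> nat \<Rightarrow> real" where
  "rot n j x = (\<lambda>k. if 1\<le>k \<and> k\<le>j then x (n+1-j+k) else if j<k \<and> k\<le>n+1 then x (k-j) else x k)"

lemma w0j_w0: "j \<le> n+1 \<Longrightarrow> w0j_act n j (w0_act n (x,a,b)) = (rot n j x, a, b)"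
  unfolding w0j_act_def w0_act_def rot_def
  by (auto intro!: ext simp: Suc_diff_le)

lemma sum_rot:
  fixes h :: "nat \<Rightarrow> real \<Rightarrow> real"
  assumes "j \<le> n+1"
  shows "(\<Sum>k=1..n+1. h k (rot n j x k)) = (\<Sum>m=1..n+1-j. h (m+j) (x m)) + (\<Sum>m=Suc (n+1-j)..n+1. h (m+j-(n+1)) (x m))"
proof -
  have "(\<Sum>k=1..n+1. h k (rot n j x k)) = (\<Sum>k=1..j. h k (rot n j x k)) + (\<Sum>k=Suc j..n+1. h k (rot n j x k))"
    using assms by (rule split_sum)
  also have "(\<Sum>k=1..j. h k (rot n j x k)) = (\<Sum>k=1..j. h k (x (n+1-j+k)))"
    by (rule sum.cong) (auto simp: rot_def)
  also have "\<dots> = (\<Sum>m=Suc (n+1-j)..n+1. h (m+j-(n+1)) (x m))"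
    by (rule sum.reindex_bij_witness[where i="\<lambda>m. m+j-(n+1)" and j="\<lambda>k. n+1-j+k"]) (use assms in auto)
  also have "(\<Sum>k=Suc j..n+1. h k (rot n j x k)) = (\<Sum>k=Suc j..n+1. h k (x (k-j)))"
    by (rule sum.cong) (auto simp: rot_def)
  also have "\<dots> = (\<Sum>m=1..n+1-j. h (m+j) (x m))"
    by (rule sum.reindex_bij_witness[where i="\<lambda>m. m+j" and j="\<lambda>k. k-j"]) (use assms in auto)
  finally show ?thesis by simp
qed


lemma split_sum_Suc: "j \<le> n+1 \<Longrightarrow> (\<Sum>k=1..n+1. f k) = (\<Sum>k=1..n+1-j. f k) + (\<Sum>k=Suc (n+1-j)..n+1. (f k::real))"
  by (rule split_sum) simp

lemma rot_sum: "j \<le> n+1 \<Longrightarrow> (\<Sum>k=1..n+1. rot n j x k) = (\<Sum>k=1..n+1. x k)"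
  using sum_rot[of j n "\<lambda>k t. t" x] split_sum_Suc[of j n x] by simp

lemma rot_ipsq: "j \<le> n+1 \<Longrightarrow> ip n (rot n j x) (rot n j x) = ip n x x"
  unfolding ip_def using sum_rot[of j n "\<lambda>k t. t*t" x] split_sum_Suc[of j n "\<lambda>k. x k * x k"] by simp

lemma rot_ip_omega:
  assumes "j \<le> n+1"
  shows "ip n (rot n j x) (omega n j) = (\<Sum>m=Suc (n+1-j)..n+1. x m) - real j / real (n+1) * (\<Sum>k=1..n+1. x k)"
proof -
  let ?c = "real j / real (n+1)"
  have "ip n (rot n j x) (omega n j) = (\<Sum>m=1..n+1-j. omega n j (m+j) * x m) + (\<Sum>m=Suc (n+1-j)..n+1. omega n j (m+j-(n+1)) * x m)"
    unfolding ip_def using sum_rot[of j n "\<lambda>k t. t * omega n j k" x, OF assms] by (simp add: mult.commute)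
  also have "(\<Sum>m=1..n+1-j. omega n j (m+j) * x m) = (\<Sum>m=1..n+1-j. - ?c * x m)"
    by (rule sum.cong) (auto simp: omega_def)
  also have "(\<Sum>m=Suc (n+1-j)..n+1. omega n j (m+j-(n+1)) * x m) = (\<Sum>m=Suc (n+1-j)..n+1. x m - ?c * x m)"
    by (rule sum.cong) (use assms in \<open>auto simp: omega_def algebra_simps\<close>)
  also have "(\<Sum>m=1..n+1-j. - ?c * x m) = - ?c * (\<Sum>m=1..n+1-j. x m)"
    by (simp only: sum_distrib_left)
  also have "(\<Sum>m=Suc (n+1-j)..n+1. x m - ?c * x m) = (\<Sum>m=Suc (n+1-j)..n+1. x m) - ?c * (\<Sum>m=Suc (n+1-j)..n+1. x m)"
    by (simp only: sum_subtractf sum_distrib_left)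
  finally show ?thesis unfolding split_sum_Suc[of j n x, OF assms]
    by (simp only: algebra_simps)
qed

lemma rot_ip_rho:
  assumes "j \<le> n+1"
  shows "ip n (rot n j x) (rho n) = ip n x (rho n) - real j * (\<Sum>k=1..n+1. x k) + real (n+1) * (\<Sum>m=Suc (n+1-j)..n+1. x m)"
proof -
  have "ip n (rot n j x) (rho n) = (\<Sum>m=1..n+1-j. rho n (m+j) * x m) + (\<Sum>m=Suc (n+1-j)..n+1. rho n (m+j-(n+1)) * x m)"
    unfolding ip_def using sum_rot[of j n "\<lambda>k t. t * rho n k" x, OF assms] by (simp add: mult.commute)
  also have "(\<Sum>m=1..n+1-j. rho n (m+j) * x m) = (\<Sum>m=1..n+1-j. x m * rho n m - real j * x m)"
    by (rule sum.cong) (auto simp: rho_def field_simps)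
  also have "(\<Sum>m=Suc (n+1-j)..n+1. rho n (m+j-(n+1)) * x m) = (\<Sum>m=Suc (n+1-j)..n+1. x m * rho n m - real j * x m + real (n+1) * x m)"
    by (rule sum.cong) (use assms in \<open>auto simp: rho_def field_simps of_nat_diff\<close>)
  also have "(\<Sum>m=1..n+1-j. x m * rho n m - real j * x m) = (\<Sum>m=1..n+1-j. x m * rho n m) - real j * (\<Sum>m=1..n+1-j. x m)"
    by (simp only: sum_subtractf sum_distrib_left)
  also have "(\<Sum>m=Suc (n+1-j)..n+1. x m * rho n m - real j * x m + real (n+1) * x m) = (\<Sum>m=Suc (n+1-j)..n+1. x m * rho n m) - real j * (\<Sum>m=Suc (n+1-j)..n+1. x m) + real (n+1) * (\<Sum>m=Suc (n+1-j)..n+1. x m)"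
    by (simp only: sum_subtractf sum.distrib sum_distrib_left)
  finally show ?thesis unfolding ip_def split_sum_Suc[of j n x, OF assms] split_sum_Suc[of j n "\<lambda>k. x k * rho n k", OF assms]
    by (simp only: algebra_simps)
qed


lemma rho_partial: "(\<Sum>k=1..p. rho n k) = real p * (real n + 1 - real p) / 2"
  by (induction p) (auto simp: rho_def field_simps sum.cl_ivl_Suc)

lemma sum_if_split: "j \<le> N \<Longrightarrow> (\<Sum>k=1..N. if k \<le> j then f k else g k) = (\<Sum>k=1..j. f k) + (\<Sum>k=Suc j..N. (g k::real))"
  apply (subst split_sum[of j N], assumption)
  apply (intro arg_cong2[where f="(+)"] sum.cong)
  by auto

lemma omega_on: "k \<in> {1..n+1} \<Longrightarrow> omega n j k = (if k \<le> j then 1 - real j / real (n+1) else - (real j / real (n+1)))"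
  by (auto simp: omega_def)

lemma omega_sum: assumes "j \<le> n+1" shows "(\<Sum>k=1..n+1. omega n j k) = 0"
proof -
  have "(\<Sum>k=1..n+1. omega n j k) = (\<Sum>k=1..n+1. if k \<le> j then 1 - real j / real (n+1) else - (real j / real (n+1)))"
    by (rule sum.cong) (auto simp: omega_on)
  also have "\<dots> = real j * (1 - real j / real (n+1)) - real (n+1-j) * (real j / real (n+1))"
    unfolding sum_if_split[OF assms] by simp
  also have "\<dots> = 0" using assms by (simp add: field_simps of_nat_diff)
  finally show ?thesis .
qed

lemma aux_real: "(N::real) > 0 \<Longrightarrow> J*(1-J/N)^2 + (N-J)*(J/N)^2 = J*(N-J)/N"
  by (simp add: field_simps power2_eq_square)

lemma omega_sq: assumes "j \<le> n+1" shows "ip n (omega n j) (omega n j) = real j * (real n + 1 - real j) / (real n + 1)"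
proof -
  have "ip n (omega n j) (omega n j) = (\<Sum>k=1..n+1. if k \<le> j then (1 - real j / real (n+1))^2 else (real j / real (n+1))^2)"
    unfolding ip_def by (rule sum.cong) (auto simp: omega_on power2_eq_square)
  also have "\<dots> = real j * (1 - real j / real (n+1))^2 + real (n+1-j) * (real j / real (n+1))^2"
    unfolding sum_if_split[OF assms] by simp
  also have "\<dots> = real j * (real n + 1 - real j) / (real n + 1)" using assms
    aux_real[of "real n + 1" "real j"] by (simp add: of_nat_diff ac_simps)
  finally show ?thesis .
qed

lemma omega_rho: assumes "j \<le> n+1" shows "ip n (omega n j) (rho n) = real j * (real n + 1 - real j) / 2"
proof -
  let ?c = "real j / real (n+1)"
  have "ip n (omega n j) (rho n) = (\<Sum>k=1..n+1. (if k \<le> j then rho n k else 0) - ?c * rho n k)"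
    unfolding ip_def by (rule sum.cong) (auto simp: omega_on algebra_simps)
  also have "\<dots> = (\<Sum>k=1..n+1. (if k \<le> j then rho n k else 0)) - ?c * (\<Sum>k=1..n+1. rho n k)"
    by (simp only: sum_subtractf sum_distrib_left)
  also have "(\<Sum>k=1..n+1. (if k \<le> j then rho n k else 0)) = (\<Sum>k=1..j. rho n k)"
    unfolding sum_if_split[OF assms] by simp
  finally show ?thesis by (simp only: rho_partial) (simp add: field_simps)
qed


lemma sigma_eq: "1 \<le> j \<Longrightarrow> j \<le> n+1 \<Longrightarrow> sigma n j (x,a,b) =
   (\<lambda>k. rot n j x k + a * omega n j k, a, b - ip n (rot n j x) (omega n j) - ip n (omega n j) (omega n j) / 2 * a)"
  unfolding sigma_def by (simp add: w0j_w0 transl_def ip_comm)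

definition Lv :: "nat \<Rightarrow> hdual \<Rightarrow> real" where "Lv n v = pair_rho_check n (hsub Lambda0 v)"

lemma Lv_eq: "Lv n (x,a,b) = - ip n x (rho n) - real (n+1) * b"
  unfolding Lv_def pair_rho_check_def hsub_def Lambda0_def by (simp add: ip_uminus_left)

lemma al_Lv: "atomic_length n g = Lv n (g Lambda0)"
  unfolding atomic_length_def Lv_def ..

definition Pv :: "nat \<Rightarrow> hdual \<Rightarrow> bool" where
  "Pv n v = (case v of (x,a,b) \<Rightarrow> a = 1 \<and> (\<Sum>k=1..n+1. x k) = 0 \<and> ip n x x + 2*b = 0)"

lemma ip_expand: "ip n (\<lambda>k. y k + a * z k) (\<lambda>k. y k + a * z k) = ip n y y + 2*a*ip n y z + a^2 * ip n z z"
proof -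
  have "ip n (\<lambda>k. y k + a * z k) (\<lambda>k. y k + a * z k) = (\<Sum>k=1..n+1. y k * y k + (2*a) * (y k * z k) + a^2 * (z k * z k))"
    unfolding ip_def by (rule sum.cong) (auto simp: algebra_simps power2_eq_square)
  also have "\<dots> = ip n y y + 2*a*ip n y z + a^2 * ip n z z"
    unfolding ip_def by (simp only: sum.distrib sum_distrib_left)
  finally show ?thesis .
qed

lemma ip_expand_minus: "ip n (\<lambda>k. y k - a * z k) (\<lambda>k. y k - a * z k) = ip n y y - 2*a*ip n y z + a^2 * ip n z z"
  using ip_expand[of n y "-a" z] by simp

lemma aux2: "(N::real) \<noteq> 0 \<Longrightarrow> -((R - J*S + N*T) + J*(N-J)/2)
   - N*(b - (T - J/N*S) - J*(N-J)/N/2 * 1) = -R - N*b"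
  by (simp add: field_simps)

lemma sigma_L: assumes "1 \<le> j" "j \<le> n+1" shows "Lv n (sigma n j (x,1,b)) = Lv n (x,1,b)"
proof -
  have "Lv n (sigma n j (x,1,b)) = - (ip n (rot n j x) (rho n) + ip n (omega n j) (rho n))
     - real(n+1) * (b - ip n (rot n j x) (omega n j) - ip n (omega n j) (omega n j) / 2 * 1)"
    by (simp add: sigma_eq[OF assms] Lv_eq ip_add_left)
  also have "\<dots> = - ip n x (rho n) - real(n+1) * b"
  proof -
    define N where "N = real n + 1"
    have N0: "N \<noteq> 0" by (simp add: N_def)
    have rN: "real (n+1) = N" by (simp add: N_def)
    show ?thesis
      unfolding rot_ip_rho[OF assms(2)] rot_ip_omega[OF assms(2)] omega_rho[OF assms(2)] omega_sq[OF assms(2)]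
        rN N_def[symmetric]
      using aux2[OF N0] by simp
  qed
  finally show ?thesis by (simp add: Lv_eq)
qed

lemma sigma_P: assumes "1 \<le> j" "j \<le> n+1" shows "Pv n (sigma n j (x,a,b)) = Pv n (x,a,b)"
proof (cases "a = 1")
  case True
  have s: "(\<Sum>k=1..n+1. rot n j x k + 1 * omega n j k) = (\<Sum>k=1..n+1. x k)"
    by (simp only: mult_1 sum.distrib rot_sum[OF assms(2)] omega_sum[OF assms(2)] add_0_right)
  have q: "ip n (\<lambda>k. rot n j x k + 1 * omega n j k) (\<lambda>k. rot n j x k + 1 * omega n j k)
     + 2 * (b - ip n (rot n j x) (omega n j) - ip n (omega n j) (omega n j) / 2 * 1) = ip n x x + 2 * b"
    unfolding ip_expand rot_ipsq[OF assms(2)] by simp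
  show ?thesis unfolding sigma_eq[OF assms] Pv_def True case_prod_conv using s q
    by (smt (verit))
qed (simp add: sigma_eq[OF assms] Pv_def)


lemma eps_sum: "1 \<le> i \<Longrightarrow> i \<le> n+1 \<Longrightarrow> (\<Sum>k=1..n+1. eps i k) = 1"
  unfolding eps_def by simp

lemma eps_sq: "a \<noteq> b \<Longrightarrow> (eps a k - eps b k) * (eps a k - eps b k) = eps a k + eps b k"
  unfolding eps_def by auto

lemma sr: assumes "i \<le> n" "1 \<le> n"
  shows "\<exists>y b'. simple_root n i = (y, 0, b') \<and> (\<Sum>k=1..n+1. y k) = 0 \<and> ip n y y = 2"
proof (cases "i = 0")
  case True
  have e1: "(\<Sum>k=1..n+1. eps 1 k) = 1" "(\<Sum>k=1..n+1. eps (n+1) k) = 1"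
    by (rule eps_sum; simp)+
  have "(\<Sum>k=1..n+1. - theta n k) = 0"
    unfolding theta_def sum_negf sum_subtractf e1 by simp
  moreover have "ip n (\<lambda>k. - theta n k) (\<lambda>k. - theta n k) = 2"
  proof -
    have "ip n (\<lambda>k. - theta n k) (\<lambda>k. - theta n k) = (\<Sum>k=1..n+1. eps 1 k + eps (n+1) k)"
      unfolding ip_def theta_def using assms by (intro sum.cong) (auto simp: eps_sq)
    also have "\<dots> = 2" unfolding sum.distrib e1 by simp
    finally show ?thesis .
  qed
  ultimately show ?thesis using True by (simp add: simple_root_def)
next
  case False
  have e2: "(\<Sum>k=1..n+1. eps i k) = 1" "(\<Sum>k=1..n+1. eps (Suc i) k) = 1"
    using assms False by (rule_tac eps_sum; simp)+
  have "(\<Sum>k=1..n+1. eps i k - eps (Suc i) k) = 0"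
    unfolding sum_subtractf e2 by simp
  moreover have "ip n (\<lambda>k. eps i k - eps (Suc i) k) (\<lambda>k. eps i k - eps (Suc i) k) = 2"
  proof -
    have "ip n (\<lambda>k. eps i k - eps (Suc i) k) (\<lambda>k. eps i k - eps (Suc i) k) = (\<Sum>k=1..n+1. eps i k + eps (Suc i) k)"
      unfolding ip_def by (intro sum.cong) (auto simp: eps_sq)
    also have "\<dots> = 2" unfolding sum.distrib e2 by simp
    finally show ?thesis .
  qed
  ultimately show ?thesis using False by (simp add: simple_root_def)
qed

lemma ip_scale_right: "ip n x (\<lambda>k. c * y k) = c * ip n x y"
  using ip_scale_left[of n c y x] by (simp add: ip_comm)

lemma refl_P: assumes "i \<le> n" "1 \<le> n" "Pv n v" shows "Pv n (refl n i v)"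
proof -
  obtain y b' where y: "simple_root n i = (y, 0, b')" "(\<Sum>k=1..n+1. y k) = 0" "ip n y y = 2"
    using sr[OF assms(1,2)] by blast
  obtain x a b where v: "v = (x,a,b)" by (cases v)
  have a: "a = 1" and sx: "(\<Sum>k=1..n+1. x k) = 0" and nx: "ip n x x + 2*b = 0"
    using assms(3) by (auto simp: Pv_def v)
  define c where "c = ip n x y + b'"
  have r: "refl n i v = (\<lambda>k. x k - c * y k, 1, b - c * b')"
    unfolding refl_def v y(1) form_def c_def Let_def using a by simp
  have s: "(\<Sum>k=1..n+1. x k - c * y k) = 0"
    by (simp only: sum_subtractf sum_distrib_left[symmetric] sx y(2)) 
  have q: "ip n (\<lambda>k. x k - c * y k) (\<lambda>k. x k - c * y k) + 2 * (b - c * b') = 0"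
    unfolding ip_expand_minus y(3) using nx c_def by (simp add: algebra_simps power2_eq_square)
  show ?thesis unfolding r Pv_def using s q by simp
qed

lemma affW_P: "w \<in> affW n \<Longrightarrow> 1 \<le> n \<Longrightarrow> Pv n v \<Longrightarrow> Pv n (w v)"
  by (induction w rule: affW.induct) (auto intro: refl_P)

lemma Lambda0_P: "Pv n Lambda0"
  unfolding Pv_def Lambda0_def ip_def by simp

lemma w0_inv: "w0_act n (w0_act n v) = v"
  by (cases v) (auto simp: w0_act_def intro!: ext)

lemma w0j_inv: "j \<le> n+1 \<Longrightarrow> w0j_act n j (w0j_act n j v) = v"
  by (cases v) (auto simp: w0j_act_def intro!: ext)

lemma transl_inv: "transl n (\<lambda>k. - x k) (transl n x v) = v"
proof -
  obtain y a b where v: "v = (y,a,b)" by (cases v)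
  have "ip n (\<lambda>k. y k + a * x k) (\<lambda>k. - x k) = - ip n y x - a * ip n x x"
  proof -
    have "ip n (\<lambda>k. y k + a * x k) (\<lambda>k. - x k) = - ip n (\<lambda>k. y k + a * x k) x"
      unfolding ip_def by (simp add: sum_negf)
    then show ?thesis by (simp add: ip_add_left ip_scale_left)
  qed
  then show ?thesis unfolding v transl_def by (auto simp: ip_def sum_negf power2_eq_square)
qed


lemma sigma_surj: assumes "1 \<le> j" "j \<le> n+1" shows "surj (sigma n j)"
proof (rule surjI)
  fix u
  show "sigma n j (w0_act n (w0j_act n j (transl n (\<lambda>k. - omega n j k) u))) = u"
    using assms transl_inv[of n "\<lambda>k. - omega n j k" u]
    by (simp add: sigma_def w0_inv w0j_inv)
qed

lemma Pv_split: "Pv n v \<Longrightarrow> \<exists>x b. v = (x,1,b)"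
  by (cases v) (auto simp: Pv_def)

lemma sigma_PL: assumes "1 \<le> j" "j \<le> n+1" "Pv n v"
  shows "Pv n (sigma n j v) \<and> Lv n (sigma n j v) = Lv n v"
  using Pv_split[OF assms(3)] assms sigma_P[OF assms(1,2)] sigma_L[OF assms(1,2)] by auto

lemma sigma_P_back: assumes "1 \<le> j" "j \<le> n+1" "Pv n (sigma n j v)" shows "Pv n v"
  using assms sigma_P[OF assms(1,2)] by (cases v) auto

lemma funpow_sigma1: "1 \<le> n \<Longrightarrow> Pv n v \<Longrightarrow> Pv n ((sigma n 1 ^^ j) v) \<and> Lv n ((sigma n 1 ^^ j) v) = Lv n v"
proof (induction j)
  case 0 then show ?case by simp
next
  case (Suc j)
  then show ?case using sigma_PL[of 1 n "(sigma n 1 ^^ j) v"] by simp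
qed

theorem theorem4p7:
  fixes n j :: nat and w :: "hdual \<Rightarrow> hdual"
  assumes "n \<ge> 1" and "w \<in> affW n" and "1 \<le> j" and "j \<le> n"
  shows "atomic_length n w = atomic_length n (sigma n j \<circ> w)
       \<and> atomic_length n (sigma n j \<circ> w) = atomic_length n ((sigma n 1 ^^ j) \<circ> w)
       \<and> atomic_length_F n w j = atomic_length n (pi_aut n j w)"
proof -
  have j1: "j \<le> n+1" using assms by simp
  have P0: "Pv n (w Lambda0)" using affW_P[OF assms(2,1) Lambda0_P] .
  have A: "atomic_length n (sigma n j \<circ> w) = atomic_length n w"
    unfolding al_Lv using sigma_PL[OF assms(3) j1 P0] by simp
  have B: "atomic_length n ((sigma n 1 ^^ j) \<circ> w) = atomic_length n w"
    unfolding al_Lv using funpow_sigma1[OF assms(1) P0, of j] by simp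
  define z where "z = w (sigma n j Lambda0)"
  have Pz: "Pv n z" unfolding z_def
    by (rule affW_P[OF assms(2,1)]) (use sigma_PL[OF assms(3) j1 Lambda0_P] in simp)
  define u where "u = inv (sigma n j) z"
  have su: "sigma n j u = z" unfolding u_def
    using sigma_surj[OF assms(3) j1] by (simp add: surj_f_inv_f)
  have Pu: "Pv n u" using sigma_P_back[OF assms(3) j1] Pz su by simp
  have C: "atomic_length_F n w j = atomic_length n (pi_aut n j w)"
  proof -
    have "atomic_length_F n w j = Lv n (sigma n j u)"
      unfolding atomic_length_F_def al_Lv pi_aut_def u_def z_def by simp
    also have "\<dots> = Lv n u" using sigma_PL[OF assms(3) j1 Pu] by simp
    also have "\<dots> = atomic_length n (pi_aut n j w)"
      unfolding al_Lv pi_aut_def u_def z_def by simp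
    finally show ?thesis .
  qed
  show ?thesis using A B C by simp
qed

end
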